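(* Let the alphabet be countable, $\mathcal S$ the set of sentences, $\widehat{\mathcal I}$ the set of separating interpretations, and $\mu^*:\widehat{\mathcal B}\to\mathbb R$ a (countably additive) probability measure on the Borel $\sigma$-algebra $\widehat{\mathcal B}$ on $\widehat{\mathcal I}$. Define $\mu:\mathcal S\to\mathbb R$ by $\mu(\varphi)=\mu^*(\widehat{\mathrm{Mod}}(\varphi))$. Then $\mu$ is a Gaifman probability on sentences.
   Context: Setting: higher-order logic (Church's simple theory of types, without a description operator), with Henkin semantics: an interpretation $I$ consists of domains $D_\alpha$ ($D_o=\{\mathsf T,\mathsf F\}$, $D_{\alpha\to\beta}$ a set of functions) and a valuation of constants (equality denoting identity) such that every term has a denotation; $V(t,I)$ is the denotation of a closed term $t$. An alphabet is countable if its set of constants is countable. Sentences are closed terms of type $o$; a sentence is valid if true in every interpretation. $I$ is separating if for every pair $r,s$ of closed terms of the same function type $\alpha\to\beta$ with $V(r,I)\neq V(s,I)$ there is a closed term $t$ of type $\alpha$ (over the alphabet) with $V((r\,t),I)\neq V((s\,t),I)$. $\widehat{\mathrm{Mod}}(\varphi)=\{I\in\widehat{\mathcal I}:\varphi\text{ is valid in }I\}$; these sets form a basis of a topology on $\widehat{\mathcal I}$ and $\widehat{\mathcal B}$ is its Borel $\sigma$-algebra (for countable alphabet, the $\sigma$-algebra generated by the sets $\widehat{\mathrm{Mod}}(\varphi)$). A probability on sentences is a non-negative $\mu:\mathcal S\to\mathbb R$ with $\mu(\varphi)=1$ for valid $\varphi$ and $\mu(\varphi\vee\psi)=\mu(\varphi)+\mu(\psi)$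 whenever $\neg(\varphi\wedge\psi)$ is valid. $\mu$ is Gaifman if for every pair $r,s$ of closed terms of the same function type $\alpha\to\beta$, $\mu(r=s)=\inf_{\{t_1,\dots,t_n\}}\mu(\bigwedge_{i=1}^n((r\,t_i)=(s\,t_i)))$ over all finite sets of closed terms of type $\alpha$. *)

theory Defs
  imports "HOL-Probability.Probability"
begin

datatype 'b ty = TBool | TBase 'b | TFun "'b ty" "'b ty"

datatype ('b, 'c) trm =
    Var nat "'b ty"
  | Con 'c
  | Eql "'b ty"
  | Neg
  | Conj
  | Disj
  | App "('b, 'c) trm" "('b, 'c) trm"
  | Lam nat "'b ty" "('b, 'c) trm"

primrec typeof :: "('c \<Rightarrow> 'b ty) \<Rightarrow> ('b, 'c) trm \<Rightarrow> 'b ty option" where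
  "typeof ct (Var x \<tau>) = Some \<tau>"
| "typeof ct (Con c) = Some (ct c)"
| "typeof ct (Eql \<tau>) = Some (TFun \<tau> (TFun \<tau> TBool))"
| "typeof ct Neg = Some (TFun TBool TBool)"
| "typeof ct Conj = Some (TFun TBool (TFun TBool TBool))"
| "typeof ct Disj = Some (TFun TBool (TFun TBool TBool))"
| "typeof ct (App t s) =
     (case typeof ct t of
        Some (TFun \<alpha> \<beta>) \<Rightarrow> (if typeof ct s = Some \<alpha> then Some \<beta> else None)
      | _ \<Rightarrow> None)"
| "typeof ct (Lam x \<alpha> t) = map_option (TFun \<alpha>) (typeof ct t)"

primrec fv :: "('b, 'c) trm \<Rightarrow> (nat \<times> 'b ty) set" where
  "fv (Var x \<tau>) = {(x, \<tau>)}"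
| "fv (Con c) = {}"
| "fv (Eql \<tau>) = {}"
| "fv Neg = {}"
| "fv Conj = {}"
| "fv Disj = {}"
| "fv (App t s) = fv t \<union> fv s"
| "fv (Lam x \<alpha> t) = fv t - {(x, \<alpha>)}"

definition closed_of :: "('c \<Rightarrow> 'b ty) \<Rightarrow> 'b ty \<Rightarrow> ('b, 'c) trm \<Rightarrow> bool" where
  "closed_of ct \<tau> t \<longleftrightarrow> typeof ct t = Some \<tau> \<and> fv t = {}"

definition sentence :: "('c \<Rightarrow> 'b ty) \<Rightarrow> ('b, 'c) trm \<Rightarrow> bool" where
  "sentence ct \<phi> \<longleftrightarrow> closed_of ct TBool \<phi>"

definition mk_eq :: "'b ty \<Rightarrow> ('b, 'c) trm \<Rightarrow> ('b, 'c) trm \<Rightarrow> ('b, 'c) trm" where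
  "mk_eq \<tau> r s = App (App (Eql \<tau>) r) s"

definition mk_neg :: "('b, 'c) trm \<Rightarrow> ('b, 'c) trm" where
  "mk_neg \<phi> = App Neg \<phi>"

definition mk_conj :: "('b, 'c) trm \<Rightarrow> ('b, 'c) trm \<Rightarrow> ('b, 'c) trm" where
  "mk_conj \<phi> \<psi> = App (App Conj \<phi>) \<psi>"

definition mk_disj :: "('b, 'c) trm \<Rightarrow> ('b, 'c) trm \<Rightarrow> ('b, 'c) trm" where
  "mk_disj \<phi> \<psi> = App (App Disj \<phi>) \<psi>"

definition Ttrue :: "('b, 'c) trm" where
  "Ttrue = mk_eq (TFun TBool TBool) (Lam 0 TBool (Var 0 TBool)) (Lam 0 TBool (Var 0 TBool))"

primrec conj_list :: "('b, 'c) trm list \<Rightarrow> ('b, 'c) trm" where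
  "conj_list [] = Ttrue"
| "conj_list (\<phi> # \<phi>s) = mk_conj \<phi> (conj_list \<phi>s)"

text \<open>An interpretation with carrier type 'u: domains D_\<tau> (subsets of 'u), an application
  operation (elements of D_{\<alpha>\<rightarrow>\<beta>} act as functions D_\<alpha> \<rightarrow> D_\<beta>, extensionally), the two
  truth values, and a valuation of the constants.\<close>
record ('b, 'c, 'u) interp =
  Dom :: "'b ty \<Rightarrow> 'u set"
  apl :: "'u \<Rightarrow> 'u \<Rightarrow> 'u"
  tvT :: 'u
  tvF :: 'u
  cval :: "'c \<Rightarrow> 'u"

definition env_ok :: "('b, 'c, 'u) interp \<Rightarrow> (nat \<times> 'b ty \<Rightarrow> 'u) \<Rightarrow> bool" where
  "env_ok I \<rho> \<longleftrightarrow> (\<forall>x \<tau>. \<rho> (x, \<tau>) \<in> Dom I \<tau>)"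

definition eq_den :: "('b, 'c, 'u) interp \<Rightarrow> 'b ty \<Rightarrow> 'u \<Rightarrow> bool" where
  "eq_den I \<tau> e \<longleftrightarrow> e \<in> Dom I (TFun \<tau> (TFun \<tau> TBool)) \<and>
     (\<forall>a\<in>Dom I \<tau>. \<forall>b\<in>Dom I \<tau>. apl I (apl I e a) b = (if a = b then tvT I else tvF I))"

definition neg_den :: "('b, 'c, 'u) interp \<Rightarrow> 'u \<Rightarrow> bool" where
  "neg_den I n \<longleftrightarrow> n \<in> Dom I (TFun TBool TBool) \<and>
     apl I n (tvT I) = tvF I \<and> apl I n (tvF I) = tvT I"

definition conj_den :: "('b, 'c, 'u) interp \<Rightarrow> 'u \<Rightarrow> bool" where
  "conj_den I c \<longleftrightarrow> c \<in> Dom I (TFun TBool (TFun TBool TBool)) \<and>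
     (\<forall>a\<in>Dom I TBool. \<forall>b\<in>Dom I TBool.
        apl I (apl I c a) b = (if a = tvT I \<and> b = tvT I then tvT I else tvF I))"

definition disj_den :: "('b, 'c, 'u) interp \<Rightarrow> 'u \<Rightarrow> bool" where
  "disj_den I c \<longleftrightarrow> c \<in> Dom I (TFun TBool (TFun TBool TBool)) \<and>
     (\<forall>a\<in>Dom I TBool. \<forall>b\<in>Dom I TBool.
        apl I (apl I c a) b = (if a = tvT I \<or> b = tvT I then tvT I else tvF I))"

primrec den :: "('c \<Rightarrow> 'b ty) \<Rightarrow> ('b, 'c, 'u) interp \<Rightarrow> (nat \<times> 'b ty \<Rightarrow> 'u) \<Rightarrow> ('b, 'c) trm \<Rightarrow> 'u" where
  "den ct I \<rho> (Var x \<tau>) = \<rho> (x, \<tau>)"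
| "den ct I \<rho> (Con c) = cval I c"
| "den ct I \<rho> (Eql \<tau>) = (THE e. eq_den I \<tau> e)"
| "den ct I \<rho> Neg = (THE n. neg_den I n)"
| "den ct I \<rho> Conj = (THE c. conj_den I c)"
| "den ct I \<rho> Disj = (THE c. disj_den I c)"
| "den ct I \<rho> (App t s) = apl I (den ct I \<rho> t) (den ct I \<rho> s)"
| "den ct I \<rho> (Lam x \<alpha> t) =
     (case typeof ct t of
        None \<Rightarrow> undefined
      | Some \<beta> \<Rightarrow> (THE f. f \<in> Dom I (TFun \<alpha> \<beta>) \<and>
                     (\<forall>a\<in>Dom I \<alpha>. apl I f a = den ct I (\<rho>((x, \<alpha>) := a)) t)))"

text \<open>Henkin interpretation: a (general, extensional) frame with D_o = {T,F}, constants
  valued in the right domains, and such that every term has a denotation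
  (the logical constants and all lambda-abstractions exist in the frame).\<close>
definition is_interp :: "('c \<Rightarrow> 'b ty) \<Rightarrow> ('b, 'c, 'u) interp \<Rightarrow> bool" where
  "is_interp ct I \<longleftrightarrow>
     (\<forall>\<tau>. Dom I \<tau> \<noteq> {}) \<and>
     Dom I TBool = {tvT I, tvF I} \<and> tvT I \<noteq> tvF I \<and>
     (\<forall>\<alpha> \<beta> f a. f \<in> Dom I (TFun \<alpha> \<beta>) \<longrightarrow> a \<in> Dom I \<alpha> \<longrightarrow> apl I f a \<in> Dom I \<beta>) \<and>
     (\<forall>\<alpha> \<beta> f g. f \<in> Dom I (TFun \<alpha> \<beta>) \<longrightarrow> g \<in> Dom I (TFun \<alpha> \<beta>) \<longrightarrow>
        (\<forall>a\<in>Dom I \<alpha>. apl I f a = apl I g a) \<longrightarrow> f = g) \<and>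
     (\<forall>c. cval I c \<in> Dom I (ct c)) \<and>
     (\<forall>\<tau>. \<exists>e. eq_den I \<tau> e) \<and>
     (\<exists>n. neg_den I n) \<and> (\<exists>c. conj_den I c) \<and> (\<exists>c. disj_den I c) \<and>
     (\<forall>\<rho> x \<alpha> t \<beta>. env_ok I \<rho> \<longrightarrow> typeof ct t = Some \<beta> \<longrightarrow>
        (\<exists>f\<in>Dom I (TFun \<alpha> \<beta>). \<forall>a\<in>Dom I \<alpha>. apl I f a = den ct I (\<rho>((x, \<alpha>) := a)) t))"

text \<open>V(t, I) for closed t (independent of the chosen assignment).\<close>
definition V :: "('c \<Rightarrow> 'b ty) \<Rightarrow> ('b, 'c, 'u) interp \<Rightarrow> ('b, 'c) trm \<Rightarrow> 'u" where
  "V ct I t = den ct I (SOME \<rho>. env_ok I \<rho>) t"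

definition valid_in :: "('c \<Rightarrow> 'b ty) \<Rightarrow> ('b, 'c, 'u) interp \<Rightarrow> ('b, 'c) trm \<Rightarrow> bool" where
  "valid_in ct I \<phi> \<longleftrightarrow> V ct I \<phi> = tvT I"

text \<open>Validity: true in every interpretation (over the carrier type 'u).\<close>
definition valid :: "('c \<Rightarrow> 'b ty) \<Rightarrow> 'u itself \<Rightarrow> ('b, 'c) trm \<Rightarrow> bool" where
  "valid ct U \<phi> \<longleftrightarrow> sentence ct \<phi> \<and>
     (\<forall>I :: ('b, 'c, 'u) interp. is_interp ct I \<longrightarrow> valid_in ct I \<phi>)"

definition separating :: "('c \<Rightarrow> 'b ty) \<Rightarrow> ('b, 'c, 'u) interp \<Rightarrow> bool" where
  "separating ct I \<longleftrightarrow>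
     (\<forall>\<alpha> \<beta> r s. closed_of ct (TFun \<alpha> \<beta>) r \<longrightarrow> closed_of ct (TFun \<alpha> \<beta>) s \<longrightarrow>
        V ct I r \<noteq> V ct I s \<longrightarrow>
        (\<exists>t. closed_of ct \<alpha> t \<and> V ct I (App r t) \<noteq> V ct I (App s t)))"

definition Ihat :: "('c \<Rightarrow> 'b ty) \<Rightarrow> ('b, 'c, 'u) interp set" where
  "Ihat ct = {I. is_interp ct I \<and> separating ct I}"

definition ModH :: "('c \<Rightarrow> 'b ty) \<Rightarrow> ('b, 'c) trm \<Rightarrow> ('b, 'c, 'u) interp set" where
  "ModH ct \<phi> = {I \<in> Ihat ct. valid_in ct I \<phi>}"

text \<open>Open sets of the topology on Ihat with basis the sets ModH \<phi> (\<phi> a sentence),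
  and the Borel sigma-algebra.\<close>
definition opensH :: "('c \<Rightarrow> 'b ty) \<Rightarrow> ('b, 'c, 'u) interp set set" where
  "opensH ct = {U. U \<subseteq> Ihat ct \<and>
     (\<forall>I\<in>U. \<exists>\<phi>. sentence ct \<phi> \<and> I \<in> ModH ct \<phi> \<and> ModH ct \<phi> \<subseteq> U)}"

definition borelH :: "('c \<Rightarrow> 'b ty) \<Rightarrow> ('b, 'c, 'u) interp set set" where
  "borelH ct = sigma_sets (Ihat ct) (opensH ct)"

definition prob_sent :: "('c \<Rightarrow> 'b ty) \<Rightarrow> 'u itself \<Rightarrow> (('b, 'c) trm \<Rightarrow> real) \<Rightarrow> bool" where
  "prob_sent ct U \<mu> \<longleftrightarrow>
     (\<forall>\<phi>. sentence ct \<phi> \<longrightarrow> \<mu> \<phi> \<ge> 0) \<and>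
     (\<forall>\<phi>. valid ct U \<phi> \<longrightarrow> \<mu> \<phi> = 1) \<and>
     (\<forall>\<phi> \<psi>. sentence ct \<phi> \<longrightarrow> sentence ct \<psi> \<longrightarrow> valid ct U (mk_neg (mk_conj \<phi> \<psi>)) \<longrightarrow>
        \<mu> (mk_disj \<phi> \<psi>) = \<mu> \<phi> + \<mu> \<psi>)"

definition gaifman :: "('c \<Rightarrow> 'b ty) \<Rightarrow> 'u itself \<Rightarrow> (('b, 'c) trm \<Rightarrow> real) \<Rightarrow> bool" where
  "gaifman ct U \<mu> \<longleftrightarrow> prob_sent ct U \<mu> \<and>
     (\<forall>\<alpha> \<beta> r s. closed_of ct (TFun \<alpha> \<beta>) r \<longrightarrow> closed_of ct (TFun \<alpha> \<beta>) s \<longrightarrow>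
        \<mu> (mk_eq (TFun \<alpha> \<beta>) r s) =
          (INF ts \<in> {ts. \<forall>t\<in>set ts. closed_of ct \<alpha> t}.
             \<mu> (conj_list (map (\<lambda>t. mk_eq \<beta> (App r t) (App s t)) ts))))"

end

theory Submission
  imports Defs "HOL-Library.Countable"
begin

lemma I_ext: "is_interp ct I \<Longrightarrow> f \<in> Dom I (TFun \<alpha> \<beta>) \<Longrightarrow> g \<in> Dom I (TFun \<alpha> \<beta>) \<Longrightarrow>
   (\<And>a. a \<in> Dom I \<alpha> \<Longrightarrow> apl I f a = apl I g a) \<Longrightarrow> f = g"
  unfolding is_interp_def by blast

lemma I_apl: "is_interp ct I \<Longrightarrow> f \<in> Dom I (TFun \<alpha> \<beta>) \<Longrightarrow> a \<in> Dom I \<alpha> \<Longrightarrow> apl I f a \<in> Dom I \<beta>"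
  unfolding is_interp_def by blast

lemma I_bool: "is_interp ct I \<Longrightarrow> Dom I TBool = {tvT I, tvF I}"
  unfolding is_interp_def by blast

lemma I_TF: "is_interp ct I \<Longrightarrow> tvT I \<noteq> tvF I"
  unfolding is_interp_def by blast

lemma eq_den_the:
  assumes I: "is_interp ct I" shows "eq_den I \<tau> (THE e. eq_den I \<tau> e)"
proof (rule theI')
  obtain e where e: "eq_den I \<tau> e" using I unfolding is_interp_def by blast
  have "e' = e" if e': "eq_den I \<tau> e'" for e'
  proof (rule I_ext[OF I])
    show "e' \<in> Dom I (TFun \<tau> (TFun \<tau> TBool))" "e \<in> Dom I (TFun \<tau> (TFun \<tau> TBool))"
      using e e' unfolding eq_den_def by auto
    fix a assume a: "a \<in> Dom I \<tau>"
    show "apl I e' a = apl I e a"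
    proof (rule I_ext[OF I])
      show "apl I e' a \<in> Dom I (TFun \<tau> TBool)"
        by (rule I_apl[OF I _ a]) (use e' in \<open>simp add: eq_den_def\<close>)
      show "apl I e a \<in> Dom I (TFun \<tau> TBool)"
        by (rule I_apl[OF I _ a]) (use e in \<open>simp add: eq_den_def\<close>)
    qed (use e e' a in \<open>auto simp: eq_den_def\<close>)
  qed
  then show "\<exists>!e. eq_den I \<tau> e" using e by blast
qed

lemma neg_den_the:
  assumes I: "is_interp ct I" shows "neg_den I (THE e. neg_den I e)"
proof (rule theI')
  obtain e where e: "neg_den I e" using I unfolding is_interp_def by blast
  have "e' = e" if e': "neg_den I e'" for e'
    apply (rule I_ext[OF I])
    using e e' I_bool[OF I] unfolding neg_den_def by auto
  then show "\<exists>!e. neg_den I e" using e by blast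
qed

lemma conj_den_the:
  assumes I: "is_interp ct I" shows "conj_den I (THE e. conj_den I e)"
proof (rule theI')
  obtain e where e: "conj_den I e" using I unfolding is_interp_def by blast
  have "e' = e" if e': "conj_den I e'" for e'
  proof (rule I_ext[OF I])
    show "e' \<in> Dom I (TFun TBool (TFun TBool TBool))" "e \<in> Dom I (TFun TBool (TFun TBool TBool))"
      using e e' unfolding conj_den_def by auto
    fix a assume a: "a \<in> Dom I TBool"
    show "apl I e' a = apl I e a"
    proof (rule I_ext[OF I])
      show "apl I e' a \<in> Dom I (TFun TBool TBool)"
        by (rule I_apl[OF I _ a]) (use e' in \<open>simp add: conj_den_def\<close>)
      show "apl I e a \<in> Dom I (TFun TBool TBool)"
        by (rule I_apl[OF I _ a]) (use e in \<open>simp add: conj_den_def\<close>)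
    qed (use e e' a in \<open>auto simp: conj_den_def\<close>)
  qed
  then show "\<exists>!e. conj_den I e" using e by blast
qed

lemma disj_den_the:
  assumes I: "is_interp ct I" shows "disj_den I (THE e. disj_den I e)"
proof (rule theI')
  obtain e where e: "disj_den I e" using I unfolding is_interp_def by blast
  have "e' = e" if e': "disj_den I e'" for e'
  proof (rule I_ext[OF I])
    show "e' \<in> Dom I (TFun TBool (TFun TBool TBool))" "e \<in> Dom I (TFun TBool (TFun TBool TBool))"
      using e e' unfolding disj_den_def by auto
    fix a assume a: "a \<in> Dom I TBool"
    show "apl I e' a = apl I e a"
    proof (rule I_ext[OF I])
      show "apl I e' a \<in> Dom I (TFun TBool TBool)"
        by (rule I_apl[OF I _ a]) (use e' in \<open>simp add: disj_den_def\<close>)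
      show "apl I e a \<in> Dom I (TFun TBool TBool)"
        by (rule I_apl[OF I _ a]) (use e in \<open>simp add: disj_den_def\<close>)
    qed (use e e' a in \<open>auto simp: disj_den_def\<close>)
  qed
  then show "\<exists>!e. disj_den I e" using e by blast
qed

lemma den_typed:
  assumes I: "is_interp ct I"
  shows "env_ok I \<rho> \<Longrightarrow> typeof ct t = Some \<tau> \<Longrightarrow> den ct I \<rho> t \<in> Dom I \<tau>"
proof (induction t arbitrary: \<rho> \<tau>)
  case (Var x1 x2) then show ?case by (simp add: env_ok_def)
next
  case (Con x) then show ?case using I unfolding is_interp_def by auto
next
  case (Eql x) then show ?case using eq_den_the[OF I, of x] by (auto simp: eq_den_def)
next
  case Neg then show ?case using neg_den_the[OF I] by (auto simp: neg_den_def)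
next
  case Conj then show ?case using conj_den_the[OF I] by (auto simp: conj_den_def)
next
  case Disj then show ?case using disj_den_the[OF I] by (auto simp: disj_den_def)
next
  case (App t1 t2)
  then obtain \<alpha> where t1: "typeof ct t1 = Some (TFun \<alpha> \<tau>)" and t2: "typeof ct t2 = Some \<alpha>"
    by (auto split: option.splits ty.splits if_splits)
  show ?case using App.IH[OF App.prems(1)] t1 t2 I_apl[OF I] by simp
next
  case (Lam x \<alpha> t)
  then obtain \<beta> where tb: "typeof ct t = Some \<beta>" and tau: "\<tau> = TFun \<alpha> \<beta>" by auto
  let ?P = "\<lambda>f. f \<in> Dom I (TFun \<alpha> \<beta>) \<and> (\<forall>a\<in>Dom I \<alpha>. apl I f a = den ct I (\<rho>((x, \<alpha>) := a)) t)"
  obtain f where f: "?P f" using I Lam.prems(1) tb unfolding is_interp_def by blast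
  have "\<exists>!f. ?P f"
    using f I_ext[OF I, of _ \<alpha> \<beta>] by metis
  then have "?P (THE f. ?P f)" by (rule theI')
  then show ?case using tb tau by simp
qed

definition rho0 :: "('b, 'c, 'u) interp \<Rightarrow> (nat \<times> 'b ty \<Rightarrow> 'u)" where
  "rho0 I = (SOME \<rho>. env_ok I \<rho>)"

lemma env_ok_rho0:
  assumes I: "is_interp ct I" shows "env_ok I (rho0 I)"
proof -
  have "\<exists>\<rho>. env_ok I \<rho>"
    by (rule exI[of _ "\<lambda>p. SOME a. a \<in> Dom I (snd p)"])
       (use I in \<open>auto simp: env_ok_def is_interp_def some_in_eq\<close>)
  then show ?thesis unfolding rho0_def by (rule someI_ex)
qed

lemma V_typed: "is_interp ct I \<Longrightarrow> typeof ct t = Some \<tau> \<Longrightarrow> V ct I t \<in> Dom I \<tau>"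
  unfolding V_def using den_typed env_ok_rho0 unfolding rho0_def by blast

lemma V_App: "V ct I (App a b) = apl I (V ct I a) (V ct I b)"
  by (simp add: V_def)

lemma V_eq:
  assumes I: "is_interp ct I" and a: "typeof ct a = Some \<tau>" and b: "typeof ct b = Some \<tau>"
  shows "V ct I (mk_eq \<tau> a b) = (if V ct I a = V ct I b then tvT I else tvF I)"
proof -
  have "V ct I (Eql \<tau>) = (THE e. eq_den I \<tau> e)" by (simp add: V_def)
  then show ?thesis using eq_den_the[OF I, of \<tau>] V_typed[OF I a] V_typed[OF I b]
    by (simp add: mk_eq_def V_App eq_den_def)
qed

lemma V_neg:
  assumes I: "is_interp ct I" and a: "typeof ct a = Some TBool"
  shows "V ct I (mk_neg a) = (if V ct I a = tvT I then tvF I else tvT I)"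
proof -
  have "V ct I Neg = (THE e. neg_den I e)" by (simp add: V_def)
  then show ?thesis using neg_den_the[OF I] V_typed[OF I a] I_bool[OF I] I_TF[OF I]
    by (auto simp add: mk_neg_def V_App neg_den_def)
qed

lemma V_conj:
  assumes I: "is_interp ct I" and a: "typeof ct a = Some TBool" and b: "typeof ct b = Some TBool"
  shows "V ct I (mk_conj a b) = (if V ct I a = tvT I \<and> V ct I b = tvT I then tvT I else tvF I)"
proof -
  have "V ct I Conj = (THE e. conj_den I e)" by (simp add: V_def)
  then show ?thesis using conj_den_the[OF I] V_typed[OF I a] V_typed[OF I b]
    by (simp add: mk_conj_def V_App conj_den_def)
qed

lemma V_disj:
  assumes I: "is_interp ct I" and a: "typeof ct a = Some TBool" and b: "typeof ct b = Some TBool"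
  shows "V ct I (mk_disj a b) = (if V ct I a = tvT I \<or> V ct I b = tvT I then tvT I else tvF I)"
proof -
  have "V ct I Disj = (THE e. disj_den I e)" by (simp add: V_def)
  then show ?thesis using disj_den_the[OF I] V_typed[OF I a] V_typed[OF I b]
    by (simp add: mk_disj_def V_App disj_den_def)
qed

lemma typeof_Ttrue: "typeof ct Ttrue = Some TBool"
  by (simp add: Ttrue_def mk_eq_def)

lemma V_Ttrue: "is_interp ct I \<Longrightarrow> V ct I Ttrue = tvT I"
  unfolding Ttrue_def by (subst V_eq) auto

lemma inf_lemma:
  assumes P: "prob_space M" and T: "countable T" and E: "\<And>t. t \<in> T \<Longrightarrow> E t \<in> sets M"
  shows "measure M {x\<in>space M. \<forall>t\<in>T. x \<in> E t} =
    (INF ts\<in>{ts. \<forall>t\<in>set ts. t \<in> T}. measure M {x\<in>space M. \<forall>t\<in>set ts. x \<in> E t})"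
proof -
  interpret prob_space M by (rule P)
  have meas: "{x\<in>space M. \<forall>t\<in>S. x \<in> E t} \<in> sets M" if "countable S" "S \<subseteq> T" for S
  proof -
    have "{x\<in>space M. \<forall>t\<in>S. x \<in> E t} = space M \<inter> (\<Inter>t\<in>S. E t)" by auto
    also have "\<dots> \<in> sets M" using that E
    proof (cases "S = {}")
      case False
      have "(\<Inter>t\<in>S. E t) \<in> sets M"
        by (rule sets.countable_INT') (use that E False in auto)
      then show ?thesis by auto
    qed auto
    finally show ?thesis .
  qed
  let ?L = "{ts. \<forall>t\<in>set ts. t \<in> T}"
  let ?m = "\<lambda>S. measure M {x\<in>space M. \<forall>t\<in>S. x \<in> E t}"
  have bdd: "bdd_below ((\<lambda>ts. ?m (set ts)) ` ?L)" by (intro bdd_belowI[of _ 0]) auto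
  have ge: "?m T \<le> (INF ts\<in>?L. ?m (set ts))"
  proof (rule cINF_greatest)
    show "?L \<noteq> {}" by (auto intro: exI[of _ "[]"])
    fix ts assume ts: "ts \<in> ?L"
    show "?m T \<le> ?m (set ts)"
      by (rule finite_measure_mono) (use meas[of "set ts"] ts in \<open>auto simp: subset_iff countable_finite\<close>)
  qed
  have le: "(INF ts\<in>?L. ?m (set ts)) \<le> ?m T"
  proof (cases "T = {}")
    case True
    then have "(INF ts\<in>?L. ?m (set ts)) \<le> ?m (set [])"
      by (intro cINF_lower[OF bdd]) auto
    then show ?thesis using True by simp
  next
    case False
    define g where "g = from_nat_into T"
    have gT: "g n \<in> T" for n using False by (simp add: g_def from_nat_into)
    have rg: "range g = T" using False T by (simp add: g_def range_from_nat_into)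
    define B where "B n = {x\<in>space M. \<forall>t\<in>set (map g [0..<n]). x \<in> E t}" for n
    have Bs: "range B \<subseteq> sets M"
    proof safe
      fix n show "B n \<in> sets M" unfolding B_def
        by (rule meas) (use gT in \<open>auto simp: countable_finite\<close>)
    qed
    have dec: "decseq B" unfolding B_def decseq_def by auto
    have "(\<Inter>n. B n) = {x\<in>space M. \<forall>t\<in>T. x \<in> E t}"
      unfolding B_def rg[symmetric] by auto (metis atLeastLessThan_iff le0 lessI)
    then have lim: "(\<lambda>n. measure M (B n)) \<longlonglongrightarrow> ?m T"
      using finite_Lim_measure_decseq[OF Bs dec] by simp
    show ?thesis
    proof (rule LIMSEQ_le_const[OF lim], intro exI allI impI)
      fix n
      show "(INF ts\<in>?L. ?m (set ts)) \<le> measure M (B n)"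
        unfolding B_def by (rule cINF_lower[OF bdd]) (use gT in auto)
    qed
  qed
  show ?thesis using ge le by simp
qed

instance ty :: (countable) countable by countable_datatype
instance trm :: (countable, countable) countable by countable_datatype

lemma countable_trm:
  assumes "countable (UNIV :: 'b set)" "countable (UNIV :: 'c set)"
  shows "countable (UNIV :: ('b, 'c) trm set)"
proof (rule countable_image_inj_on[of "map_trm (to_nat_on (UNIV::'b set)) (to_nat_on (UNIV::'c set))"])
  show "countable (range (map_trm (to_nat_on (UNIV::'b set)) (to_nat_on (UNIV::'c set))))" by simp
  show "inj (map_trm (to_nat_on (UNIV::'b set)) (to_nat_on (UNIV::'c set)))"
    by (rule trm.inj_map) (use inj_on_to_nat_on assms in auto)
qed

lemma typeof_conj_list: "\<forall>\<phi>\<in>set \<phi>s. typeof ct \<phi> = Some TBool \<Longrightarrow> typeof ct (conj_list \<phi>s) = Some TBool"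
  by (induction \<phi>s) (auto simp: typeof_Ttrue mk_conj_def)

lemma fv_conj_list: "\<forall>\<phi>\<in>set \<phi>s. fv \<phi> = {} \<Longrightarrow> fv (conj_list \<phi>s) = {}"
  by (induction \<phi>s) (auto simp: Ttrue_def mk_eq_def mk_conj_def)

lemma V_conj_list: "is_interp ct I \<Longrightarrow> \<forall>\<phi>\<in>set \<phi>s. typeof ct \<phi> = Some TBool \<Longrightarrow>
   (V ct I (conj_list \<phi>s) = tvT I) = (\<forall>\<phi>\<in>set \<phi>s. V ct I \<phi> = tvT I)"
proof (induction \<phi>s)
  case Nil then show ?case by (simp add: V_Ttrue)
next
  case (Cons a \<phi>s)
  then show ?case using V_conj[OF Cons.prems(1), of a "conj_list \<phi>s"] typeof_conj_list[of \<phi>s ct]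
    I_TF[OF Cons.prems(1)] by auto
qed

lemma ModH_sets: "sentence ct \<phi> \<Longrightarrow> ModH ct \<phi> \<in> borelH ct"
  unfolding borelH_def
  by (rule sigma_sets.Basic) (auto simp: opensH_def ModH_def)

theorem mainTheorem12:
  fixes ct :: "'c \<Rightarrow> 'b ty"
    and M :: "('b, 'c, 'u) interp measure"
  assumes "countable (UNIV :: 'c set)"
    and "countable (UNIV :: 'b set)"
    and "prob_space M"
    and "space M = Ihat ct"
    and "sets M = borelH ct"
  shows "gaifman ct TYPE('u) (\<lambda>\<phi>. measure M (ModH ct \<phi>))"
proof -
  interpret P: prob_space M by fact
  have Ms: "ModH ct \<phi> \<in> sets M" if "sentence ct \<phi>" for \<phi>
    using ModH_sets[OF that] assms(5) by simp
  have Ii: "is_interp ct I" if "I \<in> Ihat ct" for I using that by (simp add: Ihat_def)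
  have tyS: "typeof ct \<phi> = Some TBool" if "sentence ct \<phi>" for \<phi>
    using that by (simp add: sentence_def closed_of_def)
  have ps: "prob_sent ct TYPE('u) (\<lambda>\<phi>. measure M (ModH ct \<phi>))"
    unfolding prob_sent_def
  proof (intro conjI allI impI)
    fix \<phi> assume v: "valid ct TYPE('u) \<phi>"
    have "ModH ct \<phi> = space M" using v assms(4) Ii
      unfolding valid_def ModH_def by auto
    then show "measure M (ModH ct \<phi>) = 1" by (simp add: P.prob_space)
  next
    fix \<phi> \<psi> assume s1: "sentence ct \<phi>" and s2: "sentence ct \<psi>"
      and v: "valid ct TYPE('u) (mk_neg (mk_conj \<phi> \<psi>))"
    have eq: "ModH ct (mk_disj \<phi> \<psi>) = (ModH ct \<phi> \<union> ModH ct \<psi> :: ('b, 'c, 'u) interp set)"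
    proof (rule set_eqI)
      fix I show "I \<in> ModH ct (mk_disj \<phi> \<psi>) \<longleftrightarrow> I \<in> ModH ct \<phi> \<union> ModH ct \<psi>"
      proof (cases "I \<in> Ihat ct")
        case True
        then show ?thesis using V_disj[OF Ii[OF True] tyS[OF s1] tyS[OF s2]] I_TF[OF Ii[OF True]]
          unfolding ModH_def valid_in_def by auto
      qed (auto simp: ModH_def)
    qed
    have dis: "ModH ct \<phi> \<inter> ModH ct \<psi> = ({} :: ('b, 'c, 'u) interp set)"
    proof safe
      fix I :: "('b, 'c, 'u) interp" assume a: "I \<in> ModH ct \<phi>" "I \<in> ModH ct \<psi>"
      then have I: "is_interp ct I" by (simp add: ModH_def Ii)
      have t: "typeof ct (mk_conj \<phi> \<psi>) = Some TBool" using tyS[OF s1] tyS[OF s2] by (simp add: mk_conj_def)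
      have "V ct I (mk_neg (mk_conj \<phi> \<psi>)) = tvT I" using v I unfolding valid_def valid_in_def by auto
      then show "I \<in> {}"
        using a V_neg[OF I t] V_conj[OF I tyS[OF s1] tyS[OF s2]] I_TF[OF I]
        by (auto simp: ModH_def valid_in_def split: if_splits)
    qed
    show "measure M (ModH ct (mk_disj \<phi> \<psi>)) = measure M (ModH ct \<phi>) + measure M (ModH ct \<psi>)"
      unfolding eq by (rule P.finite_measure_Union[OF Ms[OF s1] Ms[OF s2] dis])
  qed simp
  have gf: "measure M (ModH ct (mk_eq (TFun \<alpha> \<beta>) r s)) =
          (INF ts \<in> {ts. \<forall>t\<in>set ts. closed_of ct \<alpha> t}.
             measure M (ModH ct (conj_list (map (\<lambda>t. mk_eq \<beta> (App r t) (App s t)) ts))))"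
    if r: "closed_of ct (TFun \<alpha> \<beta>) r" and s: "closed_of ct (TFun \<alpha> \<beta>) s" for \<alpha> \<beta> r s
  proof -
    define T where "T = {t. closed_of ct \<alpha> t}"
    define e where "e t = mk_eq \<beta> (App r t) (App s t)" for t
    define E :: "('b, 'c) trm \<Rightarrow> ('b, 'c, 'u) interp set" where "E t = ModH ct (e t)" for t
    have tyr: "typeof ct r = Some (TFun \<alpha> \<beta>)" "typeof ct s = Some (TFun \<alpha> \<beta>)"
      using r s by (auto simp: closed_of_def)
    have tyA: "typeof ct (App r t) = Some \<beta>" "typeof ct (App s t) = Some \<beta>" if "t \<in> T" for t
      using that tyr by (auto simp: T_def closed_of_def)
    have se: "sentence ct (e t)" if "t \<in> T" for t
      using that r s by (auto simp: T_def closed_of_def sentence_def e_def mk_eq_def)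
    have cT: "countable T" by (rule countable_subset[OF subset_UNIV countable_trm[OF assms(2,1)]])
    have ET: "E t \<in> sets M" if "t \<in> T" for t using Ms[OF se[OF that]] by (simp add: E_def)
    have Ve: "valid_in ct I (e t) \<longleftrightarrow> V ct I (App r t) = V ct I (App s t)" if "t \<in> T" "I \<in> Ihat ct" for t I
      using V_eq[OF Ii[OF that(2)] tyA[OF that(1)]] I_TF[OF Ii[OF that(2)]]
      by (simp add: valid_in_def e_def)
    have main: "ModH ct (mk_eq (TFun \<alpha> \<beta>) r s) = {x\<in>space M. \<forall>t\<in>T. x \<in> E t}"
    proof (intro set_eqI iffI)
      fix I :: "('b, 'c, 'u) interp" assume "I \<in> ModH ct (mk_eq (TFun \<alpha> \<beta>) r s)"
      then have I: "I \<in> Ihat ct" and v: "V ct I (mk_eq (TFun \<alpha> \<beta>) r s) = tvT I"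
        by (auto simp: ModH_def valid_in_def)
      then have "V ct I r = V ct I s"
        using V_eq[OF Ii[OF I] tyr] I_TF[OF Ii[OF I]] by (auto split: if_splits)
      then have "\<forall>t\<in>T. I \<in> E t"
        unfolding E_def ModH_def using Ve[OF _ I] I by (simp add: V_App)
      then show "I \<in> {x\<in>space M. \<forall>t\<in>T. x \<in> E t}"
        using I assms(4) by simp
    next
      fix I assume a: "I \<in> {x\<in>space M. \<forall>t\<in>T. x \<in> E t}"
      then have I: "I \<in> Ihat ct" using assms(4) by simp
      have "V ct I r = V ct I s"
      proof (rule ccontr)
        assume "V ct I r \<noteq> V ct I s"
        then obtain t where "closed_of ct \<alpha> t" "V ct I (App r t) \<noteq> V ct I (App s t)"
          using I r s unfolding Ihat_def separating_def by blast
        moreover have "t \<in> T" using calculation(1) by (simp add: T_def)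
        moreover have "I \<in> E t" using a calculation(3) by simp
        ultimately show False using Ve[OF _ I] by (simp add: E_def ModH_def)
      qed
      then show "I \<in> ModH ct (mk_eq (TFun \<alpha> \<beta>) r s)"
        using I V_eq[OF Ii[OF I] tyr] by (simp add: ModH_def valid_in_def)
    qed
    have fin: "ModH ct (conj_list (map e ts)) = {x\<in>space M. \<forall>t\<in>set ts. x \<in> E t}"
      if "\<forall>t\<in>set ts. t \<in> T" for ts
    proof -
      have ty: "\<forall>\<phi>\<in>set (map e ts). typeof ct \<phi> = Some TBool" using that se tyS by auto
      show ?thesis
      proof (rule set_eqI)
        fix I :: "('b, 'c, 'u) interp"
        show "I \<in> ModH ct (conj_list (map e ts)) \<longleftrightarrow> I \<in> {x\<in>space M. \<forall>t\<in>set ts. x \<in> E t}"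
        proof (cases "I \<in> Ihat ct")
          case True
          show ?thesis using V_conj_list[OF Ii[OF True] ty] True assms(4)
            unfolding ModH_def valid_in_def E_def by simp
        qed (use assms(4) in \<open>simp add: ModH_def\<close>)
      qed
    qed
    have "measure M (ModH ct (mk_eq (TFun \<alpha> \<beta>) r s)) =
      (INF ts\<in>{ts. \<forall>t\<in>set ts. t \<in> T}. measure M {x\<in>space M. \<forall>t\<in>set ts. x \<in> E t})"
      unfolding main by (rule inf_lemma[OF assms(3) cT ET])
    also have "\<dots> = (INF ts\<in>{ts. \<forall>t\<in>set ts. t \<in> T}. measure M (ModH ct (conj_list (map e ts))))"
      by (rule INF_cong) (auto simp: fin)
    moreover have "e = (\<lambda>t. mk_eq \<beta> (App r t) (App s t))" by (simp add: e_def fun_eq_iff)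
    ultimately show ?thesis by (simp add: T_def)
  qed
  show ?thesis unfolding gaifman_def
    by (intro conjI ps allI impI gf)
qed

end
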